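(* For every ordinal $\alpha$ there exists a peripherally Hausdorff space $X$ with $\mathrm{rank}_{T_2}(X)=\alpha$.
   Context: For a topological space $X$ and $x\in X$, let $[x]:=\bigcap\{\overline{U}:U \text{ an open neighbourhood of } x\}$. Define $\alpha$-Hausdorff spaces by transfinite recursion: a space is $0$-Hausdorff if it is Hausdorff; for an ordinal $\alpha>0$, a $T_1$ space $X$ is $\alpha$-Hausdorff if for every $x\in X$ the subspace $[x]$ (with topology inherited from $X$) is $\beta_x$-Hausdorff for some ordinal $\beta_x<\alpha$. A space is peripherally Hausdorff if it is $\alpha$-Hausdorff for some ordinal $\alpha$, and then $\mathrm{rank}_{T_2}(X):=\min\{\alpha: X \text{ is } \alpha\text{-Hausdorff}\}$. *)

theory Defs
  imports "HOL-Analysis.Analysis"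
begin

definition nbhd_closure_core :: "'b topology \<Rightarrow> 'b \<Rightarrow> 'b set" where
  "nbhd_closure_core X x = \<Inter>{X closure_of U | U. openin X U \<and> x \<in> U}"

text \<open>Ordinals are represented by well-orders (up to order isomorphism); the ordinal
  zero is the well-order with empty field, and ordLess is ordinal comparison.
  alpha-Hausdorffness is defined by (well-founded) transfinite recursion, realised
  as an inductive predicate.  Smaller ordinals are represented on the same carrier
  type, which loses nothing since every ordinal below r is isomorphic to an
  initial segment of r.\<close>
inductive alpha_hausdorff :: "'a rel \<Rightarrow> 'b topology \<Rightarrow> bool" where
  zero: "\<lbrakk>Well_order r; Field r = {}; Hausdorff_space X\<rbrakk> \<Longrightarrow> alpha_hausdorff r X"
| pos: "\<lbrakk>Well_order r; Field r \<noteq> {}; t1_space X;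
          \<forall>x\<in>topspace X. \<exists>s. (s, r) \<in> ordLess \<and> alpha_hausdorff s (subtopology X (nbhd_closure_core X x))\<rbrakk>
        \<Longrightarrow> alpha_hausdorff r X"

definition peripherally_hausdorff :: "'a itself \<Rightarrow> 'b topology \<Rightarrow> bool" where
  "peripherally_hausdorff T X \<longleftrightarrow> (\<exists>r::'a rel. Well_order r \<and> alpha_hausdorff r X)"

definition T2_rank_is :: "'b topology \<Rightarrow> 'a rel \<Rightarrow> bool" where
  "T2_rank_is X r \<longleftrightarrow> Well_order r \<and> alpha_hausdorff r X \<and>
      (\<forall>s::'a rel. (s, r) \<in> ordLess \<longrightarrow> \<not> alpha_hausdorff s X)"

end

theory Submission
  imports Defs
begin

lemma wo_trans: "Well_order r \<Longrightarrow> (a,b)\<in>r \<Longrightarrow> (b,c)\<in>r \<Longrightarrow> (a,c)\<in>r"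
  unfolding order_on_defs trans_def by blast
lemma wo_antisym: "Well_order r \<Longrightarrow> (a,b)\<in>r \<Longrightarrow> (b,a)\<in>r \<Longrightarrow> a = b"
  unfolding order_on_defs antisym_def by blast
lemma wo_total: "Well_order r \<Longrightarrow> a \<in> Field r \<Longrightarrow> b \<in> Field r \<Longrightarrow> a \<noteq> b \<Longrightarrow> (a,b)\<in>r \<or> (b,a)\<in>r"
  unfolding order_on_defs total_on_def by blast

lemma core_char:
  assumes "x \<in> topspace X"
  shows "z \<in> nbhd_closure_core X x \<longleftrightarrow> z \<in> topspace X \<and>
     (\<forall>U V. openin X U \<longrightarrow> openin X V \<longrightarrow> x \<in> U \<longrightarrow> z \<in> V \<longrightarrow> U \<inter> V \<noteq> {})"
proof
  assume z: "z \<in> nbhd_closure_core X x"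
  have zc: "\<And>U. openin X U \<Longrightarrow> x \<in> U \<Longrightarrow> z \<in> X closure_of U"
    using z unfolding nbhd_closure_core_def by blast
  have "z \<in> X closure_of (topspace X)" by (rule zc[OF openin_topspace assms])
  hence zt: "z \<in> topspace X" by (simp add: in_closure_of)
  show "z \<in> topspace X \<and> (\<forall>U V. openin X U \<longrightarrow> openin X V \<longrightarrow> x \<in> U \<longrightarrow> z \<in> V \<longrightarrow> U \<inter> V \<noteq> {})"
  proof (intro conjI zt allI impI)
    fix U V assume "openin X U" "openin X V" "x \<in> U" "z \<in> V"
    hence "z \<in> X closure_of U" using zc by blast
    hence "\<exists>y. y \<in> U \<and> y \<in> V" using \<open>openin X V\<close> \<open>z \<in> V\<close> unfolding in_closure_of by blast
    thus "U \<inter> V \<noteq> {}" by blast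
  qed
next
  assume R: "z \<in> topspace X \<and> (\<forall>U V. openin X U \<longrightarrow> openin X V \<longrightarrow> x \<in> U \<longrightarrow> z \<in> V \<longrightarrow> U \<inter> V \<noteq> {})"
  have R1: "z \<in> topspace X" using R by (rule conjunct1)
  have R2: "\<And>U V. openin X U \<Longrightarrow> openin X V \<Longrightarrow> x \<in> U \<Longrightarrow> z \<in> V \<Longrightarrow> U \<inter> V \<noteq> {}"
    using R by blast
  have "z \<in> X closure_of U" if U: "openin X U" "x \<in> U" for U
    unfolding in_closure_of
  proof (intro conjI R1 allI impI)
    fix T assume T: "z \<in> T \<and> openin X T"
    have "U \<inter> T \<noteq> {}" using R2[OF U(1) _ U(2)] T by simp
    thus "\<exists>y. y \<in> U \<and> y \<in> T" by blast
  qed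
  thus "z \<in> nbhd_closure_core X x"
    unfolding nbhd_closure_core_def by blast
qed


lemma core_sub: assumes "x \<in> topspace X" shows "nbhd_closure_core X x \<subseteq> topspace X"
proof
  fix z assume "z \<in> nbhd_closure_core X x"
  thus "z \<in> topspace X" using core_char[OF assms, of z] by blast
qed

lemma core_homeo:
  assumes h: "homeomorphic_map X Y f" and x: "x \<in> topspace X"
  shows "nbhd_closure_core Y (f x) = f ` nbhd_closure_core X x"
proof
  have ts: "f ` topspace X = topspace Y" using h by (rule homeomorphic_imp_surjective_map)
  have inj: "inj_on f (topspace X)" using h by (rule homeomorphic_imp_injective_map)
  have fx: "f x \<in> topspace Y" using ts x by blast
  show "nbhd_closure_core Y (f x) \<subseteq> f ` nbhd_closure_core X x"
  proof
    fix z' assume z': "z' \<in> nbhd_closure_core Y (f x)"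
    have z'c: "z' \<in> topspace Y" "\<And>U V. openin Y U \<Longrightarrow> openin Y V \<Longrightarrow> f x \<in> U \<Longrightarrow> z' \<in> V \<Longrightarrow> U \<inter> V \<noteq> {}"
      using z' unfolding core_char[OF fx] by blast+
    obtain z where z: "z \<in> topspace X" "z' = f z" using z'c(1) ts by blast
    have "z \<in> nbhd_closure_core X x"
      unfolding core_char[OF x]
    proof (intro conjI z allI impI)
      fix U V assume U: "openin X U" and V: "openin X V" and xU: "x \<in> U" and zV: "z \<in> V"
      have Us: "U \<subseteq> topspace X" using U by (rule openin_subset)
      have Vs: "V \<subseteq> topspace X" using V by (rule openin_subset)
      have oU: "openin Y (f ` U)" using homeomorphic_map_openness[OF h Us] U by simp
      have oV: "openin Y (f ` V)" using homeomorphic_map_openness[OF h Vs] V by simp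
      have "f ` U \<inter> f ` V \<noteq> {}"
        using z'c(2)[OF oU oV] xU zV z(2) by blast
      then obtain u v where uv: "u \<in> U" "v \<in> V" "f u = f v" by blast
      have "u = v" using inj_onD[OF inj uv(3)] uv Us Vs by blast
      thus "U \<inter> V \<noteq> {}" using uv by blast
    qed
    thus "z' \<in> f ` nbhd_closure_core X x" using z(2) by blast
  qed
  show "f ` nbhd_closure_core X x \<subseteq> nbhd_closure_core Y (f x)"
  proof
    fix z' assume "z' \<in> f ` nbhd_closure_core X x"
    then obtain z where z: "z \<in> nbhd_closure_core X x" "z' = f z" by blast
    have zc: "z \<in> topspace X" "\<And>U V. openin X U \<Longrightarrow> openin X V \<Longrightarrow> x \<in> U \<Longrightarrow> z \<in> V \<Longrightarrow> U \<inter> V \<noteq> {}"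
      using z(1) unfolding core_char[OF x] by blast+
    have c: "continuous_map X Y f" using h by (rule homeomorphic_imp_continuous_map)
    show "z' \<in> nbhd_closure_core Y (f x)"
      unfolding core_char[OF fx]
    proof (intro conjI allI impI)
      show "z' \<in> topspace Y" using zc(1) z(2) ts by blast
      fix U V assume U: "openin Y U" and V: "openin Y V" and xU: "f x \<in> U" and zV: "z' \<in> V"
      have oU: "openin X {a \<in> topspace X. f a \<in> U}" using c U by (rule openin_continuous_map_preimage)
      have oV: "openin X {a \<in> topspace X. f a \<in> V}" using c V by (rule openin_continuous_map_preimage)
      have "{a \<in> topspace X. f a \<in> U} \<inter> {a \<in> topspace X. f a \<in> V} \<noteq> {}"
        using zc(2)[OF oU oV] x zc(1) xU zV z(2) by blast
      thus "U \<inter> V \<noteq> {}" by blast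
    qed
  qed
qed

lemma ah_homeo:
  fixes s :: "'a rel" and X :: "'b topology" and Y :: "'c topology"
  assumes "alpha_hausdorff s X"
  shows "homeomorphic_map X Y f \<Longrightarrow> alpha_hausdorff s Y"
  using assms
proof (induction arbitrary: Y f rule: alpha_hausdorff.induct)
  case (zero r X)
  have "X homeomorphic_space Y" using zero homeomorphic_space by blast
  then show ?case using zero homeomorphic_Hausdorff_space alpha_hausdorff.zero by blast
next
  case (pos r X)
  have hs: "X homeomorphic_space Y" using pos homeomorphic_space by blast
  have ts: "f ` topspace X = topspace Y" using pos homeomorphic_imp_surjective_map by blast
  show ?case
  proof (rule alpha_hausdorff.pos)
    show "Well_order r" "Field r \<noteq> {}" by fact+
    show "t1_space Y" using hs pos homeomorphic_t1_space by blast
    show "\<forall>y\<in>topspace Y. \<exists>s::'a rel. (s, r) \<in> ordLess \<and> alpha_hausdorff s (subtopology Y (nbhd_closure_core Y y))"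
    proof
      fix y assume "y \<in> topspace Y"
      then obtain x where x: "x \<in> topspace X" "y = f x" using ts by blast
      have "f ` (topspace X \<inter> nbhd_closure_core X x) = topspace Y \<inter> nbhd_closure_core Y y"
        using core_homeo[OF pos.prems x(1)] core_sub[OF x(1)] core_sub[of "f x" Y] x ts by blast
      hence "homeomorphic_map (subtopology X (nbhd_closure_core X x)) (subtopology Y (nbhd_closure_core Y y)) f"
        using homeomorphic_map_subtopologies pos.prems by blast
      thus "\<exists>s::'a rel. (s, r) \<in> ordLess \<and> alpha_hausdorff s (subtopology Y (nbhd_closure_core Y y))"
        using pos.IH x(1) by blast
    qed
  qed
qed

lemma wo_empty: "Well_order ({}::'a rel)"
  using Well_order_Restr[of "{}::'a rel" "{}"] by (simp add: order_on_defs wf_def refl_on_def total_on_def trans_def antisym_def Field_def)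

lemma empty_ordLeq: "Field s = {} \<Longrightarrow> Well_order s \<Longrightarrow> Well_order t \<Longrightarrow> (s,t) \<in> ordLeq"
  unfolding ordLeq_def embed_def by auto

lemma empty_ordLess: "Well_order (s::'a rel) \<Longrightarrow> Field s \<noteq> {} \<Longrightarrow> (({}::'a rel), s) \<in> ordLess"
proof -
  assume W: "Well_order s" and F: "Field s \<noteq> {}"
  have "embed {} s id" by (simp add: embed_def)
  moreover have "\<not> bij_betw id (Field ({}::'a rel)) (Field s)" using F by (simp add: bij_betw_def)
  ultimately have "embedS {} s id" by (simp add: embedS_def)
  thus ?thesis unfolding ordLess_def using W wo_empty by blast
qed

lemma L0: fixes s :: "'a rel" shows "Hausdorff_space X \<Longrightarrow> Well_order s \<Longrightarrow> alpha_hausdorff s X"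
proof (cases "Field s = {}")
  case True
  then show "Hausdorff_space X \<Longrightarrow> Well_order s \<Longrightarrow> alpha_hausdorff s X" using alpha_hausdorff.zero by blast
next
  case False
  assume H: "Hausdorff_space X" and W: "Well_order s"
  show "alpha_hausdorff s X"
  proof (rule alpha_hausdorff.pos[OF W False])
    show "t1_space X" using H Hausdorff_imp_t1_space by blast
    show "\<forall>x\<in>topspace X. \<exists>s'::'a rel. (s', s) \<in> ordLess \<and> alpha_hausdorff s' (subtopology X (nbhd_closure_core X x))"
    proof
      fix x
      have "alpha_hausdorff ({}::'a rel) (subtopology X (nbhd_closure_core X x))"
        by (rule alpha_hausdorff.zero[OF wo_empty _ Hausdorff_space_subtopology[OF H]]) simp
      thus "\<exists>s'::'a rel. (s', s) \<in> ordLess \<and> alpha_hausdorff s' (subtopology X (nbhd_closure_core X x))"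
        using empty_ordLess[OF W False] by blast
    qed
  qed
qed

definition segm :: "'a rel \<Rightarrow> 'a set \<Rightarrow> 'a \<Rightarrow> 'a set" where
  "segm r G b = {c\<in>G. c = b \<or> (b,c) \<in> r}"
definition carr :: "'a set \<Rightarrow> ('a set \<times> nat) set" where
  "carr A = {(G,s). finite G \<and> G \<subseteq> A \<and> (G = {} \<longrightarrow> s \<le> 1)}"
definition opV :: "'a rel \<Rightarrow> 'a set \<Rightarrow> ('a set \<times> nat) set \<Rightarrow> bool" where
  "opV r A U \<longleftrightarrow> U \<subseteq> carr A \<and> (\<forall>G s b. (G,s) \<in> U \<longrightarrow> b \<in> G \<longrightarrow> (segm r G b \<noteq> G \<or> s \<le> 1)
      \<longrightarrow> (\<exists>m. \<forall>n\<ge>m. (segm r G b, n) \<in> U))"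
definition VT :: "'a rel \<Rightarrow> 'a set \<Rightarrow> ('a set \<times> nat) topology" where
  "VT r A = topology (opV r A)"
definition isol :: "'a set \<times> nat \<Rightarrow> bool" where
  "isol p \<longleftrightarrow> fst p = {} \<or> (\<exists>b. fst p = {b} \<and> snd p \<ge> 2)"
definition ismax :: "'a rel \<Rightarrow> 'a set \<Rightarrow> 'a \<Rightarrow> bool" where
  "ismax r G \<beta> \<longleftrightarrow> \<beta> \<in> G \<and> (\<forall>c\<in>G. c = \<beta> \<or> (c,\<beta>) \<in> r)"
definition Kset :: "'a rel \<Rightarrow> 'a set \<Rightarrow> 'a \<Rightarrow> ('a set \<times> nat) set" where
  "Kset r A \<beta> = {p \<in> carr A. ismax r (fst p) \<beta> \<and> \<not> isol p}"
definition Nb :: "'a rel \<Rightarrow> 'a set \<Rightarrow> nat \<Rightarrow> nat \<Rightarrow> ('a set \<times> nat) set" where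
  "Nb r F t m = insert (F,t) {(segm r F b, n) | b n. b \<in> F \<and> m \<le> n}"

lemma segm_sub: "segm r G b \<subseteq> G" by (auto simp: segm_def)
lemma segm_mem: "b \<in> G \<Longrightarrow> b \<in> segm r G b" by (auto simp: segm_def)

lemma segm_carr: "(G,s) \<in> carr A \<Longrightarrow> b \<in> G \<Longrightarrow> (segm r G b, n) \<in> carr A"
proof -
  assume a: "(G,s) \<in> carr A" "b \<in> G"
  have "finite (segm r G b)" using a segm_sub[of r G b] finite_subset unfolding carr_def by blast
  moreover have "segm r G b \<subseteq> A" using a segm_sub[of r G b] unfolding carr_def by blast
  moreover have "segm r G b \<noteq> {}" using segm_mem[OF a(2)] by blast
  ultimately show ?thesis unfolding carr_def by blast
qed

lemma istop: "istopology (opV r A)"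
  unfolding istopology_def
proof (intro conjI allI impI)
  fix S T assume S: "opV r A S" and T: "opV r A T"
  show "opV r A (S \<inter> T)"
    unfolding opV_def
  proof (intro conjI allI impI)
    show "S \<inter> T \<subseteq> carr A" using S unfolding opV_def by blast
    fix G s b assume "(G,s) \<in> S \<inter> T" "b \<in> G" "segm r G b \<noteq> G \<or> s \<le> 1"
    then obtain m1 m2 where "\<forall>n\<ge>m1. (segm r G b, n) \<in> S" "\<forall>n\<ge>m2. (segm r G b, n) \<in> T"
      using S T unfolding opV_def by (metis IntD1 IntD2)
    thus "\<exists>m. \<forall>n\<ge>m. (segm r G b, n) \<in> S \<inter> T" by (intro exI[of _ "max m1 m2"]) auto
  qed
next
  fix K assume K: "\<forall>S\<in>K. opV r A S"
  show "opV r A (\<Union>K)"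
    unfolding opV_def
  proof (intro conjI allI impI)
    show "\<Union>K \<subseteq> carr A" using K unfolding opV_def by blast
    fix G s b assume "(G,s) \<in> \<Union>K" "b \<in> G" "segm r G b \<noteq> G \<or> s \<le> 1"
    then obtain S where "S \<in> K" "(G,s) \<in> S" by blast
    then obtain m where "\<forall>n\<ge>m. (segm r G b, n) \<in> S"
      using K \<open>b \<in> G\<close> \<open>segm r G b \<noteq> G \<or> s \<le> 1\<close> unfolding opV_def by blast
    thus "\<exists>m. \<forall>n\<ge>m. (segm r G b, n) \<in> \<Union>K" using \<open>S \<in> K\<close> by blast
  qed
qed

lemma openin_VT: "openin (VT r A) U \<longleftrightarrow> opV r A U"
  unfolding VT_def topology_inverse'[OF istop] ..

lemma opV_carr: "opV r A (carr A)"
  unfolding opV_def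
proof (intro conjI allI impI)
  fix G s b assume G: "(G,s) \<in> carr A" and b: "b \<in> G"
  have "\<And>n. (segm r G b, n) \<in> carr A" using segm_carr[OF G b] .
  thus "\<exists>m. \<forall>n\<ge>m. (segm r G b, n) \<in> carr A" by blast
qed (rule order_refl)

lemma topspace_VT: "topspace (VT r A) = carr A"
proof
  have o: "openin (VT r A) (carr A)" unfolding openin_VT by (rule opV_carr)
  show "carr A \<subseteq> topspace (VT r A)" using o by (rule openin_subset)
  have "opV r A (topspace (VT r A))" unfolding openin_VT[symmetric] by (rule openin_topspace)
  thus "topspace (VT r A) \<subseteq> carr A" unfolding opV_def by (rule conjunct1)
qed

lemma opV_single:
  assumes p: "p \<in> carr A" and i: "isol p"
  shows "opV r A {p}"
  unfolding opV_def
proof (intro conjI allI impI)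
  show "{p} \<subseteq> carr A" using p by simp
  fix G s b assume G: "(G,s) \<in> {p}" and b: "b \<in> G" and c: "segm r G b \<noteq> G \<or> s \<le> 1"
  have "G = {} \<or> (\<exists>b. G = {b} \<and> s \<ge> 2)" using i G unfolding isol_def by auto
  then obtain b0 where "G = {b0}" "s \<ge> 2" using b by blast
  hence "segm r G b = G" using b unfolding segm_def by auto
  hence False using c \<open>s \<ge> 2\<close> by simp
  thus "\<exists>m. \<forall>n\<ge>m. (segm r G b, n) \<in> {p}" by blast
qed

lemma opV_minus: "opV r A (carr A - {p})"
  unfolding opV_def
proof (intro conjI allI impI)
  fix G s b assume G: "(G,s) \<in> carr A - {p}" and b: "b \<in> G"
  have "\<forall>n\<ge>Suc (snd p). (segm r G b, n) \<in> carr A - {p}"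
  proof (intro allI impI)
    fix n assume "Suc (snd p) \<le> n"
    hence "(segm r G b, n) \<noteq> p" by auto
    moreover have "(segm r G b, n) \<in> carr A" using G b by (intro segm_carr) auto
    ultimately show "(segm r G b, n) \<in> carr A - {p}" by blast
  qed
  thus "\<exists>m. \<forall>n\<ge>m. (segm r G b, n) \<in> carr A - {p}" by blast
qed blast

lemma t1_VT: "t1_space (VT r A)"
  unfolding t1_space_closedin_singleton
proof
  fix x assume x: "x \<in> topspace (VT r A)"
  have "openin (VT r A) (topspace (VT r A) - {x})" unfolding topspace_VT openin_VT by (rule opV_minus)
  thus "closedin (VT r A) {x}" unfolding closedin_def using x by blast
qed

lemma ismax_segm: "ismax r F \<beta> \<Longrightarrow> b \<in> F \<Longrightarrow> ismax r (segm r F b) \<beta>"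
proof -
  assume a: "ismax r F \<beta>" "b \<in> F"
  have "\<beta> \<in> segm r F b" using a unfolding ismax_def segm_def by auto
  moreover have "segm r F b \<subseteq> F" by (rule segm_sub)
  ultimately show ?thesis using a unfolding ismax_def by blast
qed

lemma ismax_unique: "Well_order r \<Longrightarrow> ismax r G \<beta> \<Longrightarrow> ismax r G \<gamma> \<Longrightarrow> \<beta> = \<gamma>"
proof -
  assume a: "Well_order r" "ismax r G \<beta>" "ismax r G \<gamma>"
  hence "\<beta> = \<gamma> \<or> (\<beta>,\<gamma>) \<in> r" "\<gamma> = \<beta> \<or> (\<gamma>,\<beta>) \<in> r" unfolding ismax_def by auto
  thus ?thesis using wo_antisym[OF a(1)] by blast
qed

lemma segm_max: "Well_order r \<Longrightarrow> ismax r F \<beta> \<Longrightarrow> segm r F \<beta> = {\<beta>}"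
proof -
  assume W: "Well_order r" and m: "ismax r F \<beta>"
  show ?thesis
  proof (rule set_eqI)
    fix c
    show "c \<in> segm r F \<beta> \<longleftrightarrow> c \<in> {\<beta>}"
    proof
      assume "c \<in> segm r F \<beta>"
      hence c: "c \<in> F" "c = \<beta> \<or> (\<beta>,c) \<in> r" unfolding segm_def by auto
      hence "c = \<beta> \<or> (c,\<beta>) \<in> r" using m unfolding ismax_def by blast
      thus "c \<in> {\<beta>}" using c(2) wo_antisym[OF W, of c \<beta>] by auto
    next
      assume "c \<in> {\<beta>}"
      thus "c \<in> segm r F \<beta>" using m unfolding ismax_def segm_def by auto
    qed
  qed
qed

lemma segm_segm: "Well_order r \<Longrightarrow> b \<in> F \<Longrightarrow> b' \<in> segm r F b \<Longrightarrow> segm r (segm r F b) b' = segm r F b'"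
proof -
  assume W: "Well_order r" and "b \<in> F" "b' \<in> segm r F b"
  hence bb: "b' = b \<or> (b,b') \<in> r" unfolding segm_def by blast
  show ?thesis
  proof (rule set_eqI)
    fix c
    show "c \<in> segm r (segm r F b) b' \<longleftrightarrow> c \<in> segm r F b'"
      using bb wo_trans[OF W, of b b' c] unfolding segm_def by auto
  qed
qed

lemma Nb_tail: "b \<in> F \<Longrightarrow> m \<le> n \<Longrightarrow> (segm r F b, n) \<in> Nb r F t m"
  unfolding Nb_def by blast

lemma Nb_cases: "q \<in> Nb r F t m \<Longrightarrow> q = (F,t) \<or> (\<exists>b n. b \<in> F \<and> m \<le> n \<and> q = (segm r F b, n))"
  unfolding Nb_def by blast

lemma Nb_open:
  assumes W: "Well_order r" and p: "(F,t) \<in> carr A" and m: "2 \<le> m"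
  shows "opV r A (Nb r F t m)"
  unfolding opV_def
proof (intro conjI allI impI)
  show "Nb r F t m \<subseteq> carr A"
  proof
    fix q assume "q \<in> Nb r F t m"
    from Nb_cases[OF this] show "q \<in> carr A"
    proof
      assume "q = (F,t)" thus ?thesis using p by simp
    next
      assume "\<exists>b n. b \<in> F \<and> m \<le> n \<and> q = (segm r F b, n)"
      then obtain b n where "b \<in> F" "q = (segm r F b, n)" by blast
      thus ?thesis using segm_carr[OF p \<open>b \<in> F\<close>] by simp
    qed
  qed
  fix G s b assume G: "(G,s) \<in> Nb r F t m" and b: "b \<in> G" and c: "segm r G b \<noteq> G \<or> s \<le> 1"
  from Nb_cases[OF G] show "\<exists>m'. \<forall>n\<ge>m'. (segm r G b, n) \<in> Nb r F t m"
  proof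
    assume "(G,s) = (F,t)"
    hence GF: "G = F" by simp
    have "\<forall>n\<ge>m. (segm r G b, n) \<in> Nb r F t m"
    proof (intro allI impI)
      fix n assume "m \<le> n" thus "(segm r G b, n) \<in> Nb r F t m" using Nb_tail[of b F m n r t] b GF by simp
    qed
    thus ?thesis by blast
  next
    assume "\<exists>b n. b \<in> F \<and> m \<le> n \<and> (G,s) = (segm r F b, n)"
    then obtain b0 n0 where b0: "b0 \<in> F" "G = segm r F b0" by blast
    have e: "segm r G b = segm r F b" using segm_segm[OF W b0(1)] b b0(2) by simp
    have "b \<in> segm r F b0" using b b0(2) by simp
    hence "b \<in> F" using segm_sub[of r F b0] by blast
    have "\<forall>n\<ge>m. (segm r G b, n) \<in> Nb r F t m"
    proof (intro allI impI)
      fix n assume "m \<le> n" thus "(segm r G b, n) \<in> Nb r F t m" unfolding e using Nb_tail[of b F m n r t] \<open>b \<in> F\<close> by simp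
    qed
    thus ?thesis by blast
  qed
qed

lemma Nb_mem: "(F,t) \<in> Nb r F t m" unfolding Nb_def by blast

lemma Nb_ismax: "Well_order r \<Longrightarrow> ismax r F \<beta> \<Longrightarrow> q \<in> Nb r F t m \<Longrightarrow> ismax r (fst q) \<beta>"
proof -
  assume a: "Well_order r" "ismax r F \<beta>" "q \<in> Nb r F t m"
  show ?thesis
  proof (cases "q = (F,t)")
    case True thus ?thesis using a(2) by simp
  next
    case False
    then obtain b n where "b \<in> F" "q = (segm r F b, n)" using a(3) unfolding Nb_def by blast
    thus ?thesis using ismax_segm[OF a(2)] by simp
  qed
qed

lemma tail:
  assumes W: "Well_order r" and U: "opV r A U" and p: "(F,t) \<in> U" and mx: "ismax r F \<beta>" and ni: "\<not> isol (F,t)"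
  shows "\<exists>m. \<forall>n\<ge>m. ({\<beta>}, n) \<in> U"
proof -
  have sm: "segm r F \<beta> = {\<beta>}" using segm_max[OF W mx] .
  have "segm r F \<beta> \<noteq> F \<or> t \<le> 1" using ni sm unfolding isol_def by auto
  thus ?thesis using U p mx sm unfolding opV_def ismax_def by metis
qed

lemma max_exists:
  assumes W: "Well_order r"
  shows "finite F \<Longrightarrow> F \<noteq> {} \<Longrightarrow> F \<subseteq> Field r \<Longrightarrow> \<exists>\<beta>. ismax r F \<beta>"
proof (induction F rule: finite_ne_induct)
  case (singleton x)
  then show ?case unfolding ismax_def by blast
next
  case (insert x F)
  then obtain \<beta> where b: "ismax r F \<beta>" by blast
  have "\<beta> \<in> Field r" "x \<in> Field r" using b insert.prems unfolding ismax_def by auto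
  show ?case
  proof (cases "x = \<beta> \<or> (x,\<beta>) \<in> r")
    case True
    then show ?thesis using b unfolding ismax_def by blast
  next
    case False
    hence "(\<beta>,x) \<in> r" using wo_total[OF W \<open>\<beta> \<in> Field r\<close> \<open>x \<in> Field r\<close>] by blast
    have "\<forall>c\<in>insert x F. c = x \<or> (c, x) \<in> r"
    proof
      fix c assume "c \<in> insert x F"
      moreover have "c \<in> F \<Longrightarrow> (c, x) \<in> r"
      proof -
        assume "c \<in> F"
        hence "c = \<beta> \<or> (c,\<beta>) \<in> r" using b unfolding ismax_def by blast
        thus "(c, x) \<in> r" using wo_trans[OF W _ \<open>(\<beta>,x) \<in> r\<close>] \<open>(\<beta>,x) \<in> r\<close> by blast
      qed
      ultimately show "c = x \<or> (c, x) \<in> r" by blast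
    qed
    hence "ismax r (insert x F) x" unfolding ismax_def by blast
    thus ?thesis by blast
  qed
qed

lemma core_iso:
  assumes p: "p \<in> carr A" and i: "isol p"
  shows "nbhd_closure_core (VT r A) p \<subseteq> {p}"
proof
  fix z assume z: "z \<in> nbhd_closure_core (VT r A) p"
  have pt: "p \<in> topspace (VT r A)" using p by (simp add: topspace_VT)
  have zc: "z \<in> carr A" "\<And>U V. openin (VT r A) U \<Longrightarrow> openin (VT r A) V \<Longrightarrow> p \<in> U \<Longrightarrow> z \<in> V \<Longrightarrow> U \<inter> V \<noteq> {}"
    using z unfolding core_char[OF pt] topspace_VT by blast+
  show "z \<in> {p}"
  proof (rule ccontr)
    assume "z \<notin> {p}"
    hence zz: "z \<in> carr A - {p}" using zc(1) by simp
    have o1: "openin (VT r A) {p}" unfolding openin_VT by (rule opV_single[OF p i])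
    have o2: "openin (VT r A) (carr A - {p})" unfolding openin_VT by (rule opV_minus)
    have "{p} \<inter> (carr A - {p}) \<noteq> {}" by (rule zc(2)[OF o1 o2 _ zz]) simp
    thus False by simp
  qed
qed

lemma core_K:
  assumes W: "Well_order r" and AF: "A \<subseteq> Field r" and p: "(F,t) \<in> carr A" and ni: "\<not> isol (F,t)"
    and mx: "ismax r F \<beta>"
  shows "nbhd_closure_core (VT r A) (F,t) = Kset r A \<beta>"
proof
  have pt: "(F,t) \<in> topspace (VT r A)" using p by (simp add: topspace_VT)
  show "nbhd_closure_core (VT r A) (F,t) \<subseteq> Kset r A \<beta>"
  proof
    fix z assume z: "z \<in> nbhd_closure_core (VT r A) (F,t)"
    have zc: "z \<in> carr A" "\<And>U V. openin (VT r A) U \<Longrightarrow> openin (VT r A) V \<Longrightarrow> (F,t) \<in> U \<Longrightarrow> z \<in> V \<Longrightarrow> U \<inter> V \<noteq> {}"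
      using z unfolding core_char[OF pt] topspace_VT by blast+
    obtain G s where zGs: "z = (G,s)" by (cases z)
    show "z \<in> Kset r A \<beta>"
    proof (cases "isol z")
      case True
      define m where "m = max 2 (Suc s)"
      have o1: "openin (VT r A) (Nb r F t m)" unfolding openin_VT m_def by (rule Nb_open[OF W p]) simp
      have o2: "openin (VT r A) {z}" unfolding openin_VT by (rule opV_single[OF zc(1) True])
      have "Nb r F t m \<inter> {z} \<noteq> {}" by (rule zc(2)[OF o1 o2 Nb_mem]) simp
      hence zN: "z \<in> Nb r F t m" by simp
      from Nb_cases[OF zN] show ?thesis
      proof
        assume "z = (F,t)" hence "isol (F,t)" using True by simp
        thus ?thesis using ni by simp
      next
        assume "\<exists>b n. b \<in> F \<and> m \<le> n \<and> z = (segm r F b, n)"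
        then obtain b n where bn: "m \<le> n" "z = (segm r F b, n)" by blast
        hence "s = n" using zGs by simp
        hence False using bn(1) unfolding m_def by simp
        thus ?thesis ..
      qed
    next
      case False
      hence Gne: "G \<noteq> {}" using zGs unfolding isol_def by auto
      have Gf: "finite G" "G \<subseteq> A" using zc(1) zGs unfolding carr_def by auto
      have "G \<subseteq> Field r" using Gf(2) AF by (rule subset_trans)
      then obtain \<gamma> where g: "ismax r G \<gamma>" using max_exists[OF W Gf(1) Gne] by blast
      have zc1: "(G,s) \<in> carr A" using zc(1) zGs by simp
      have o1: "openin (VT r A) (Nb r F t 2)" unfolding openin_VT by (rule Nb_open[OF W p]) simp
      have o2: "openin (VT r A) (Nb r G s 2)" unfolding openin_VT by (rule Nb_open[OF W zc1]) simp
      have zN: "z \<in> Nb r G s 2" unfolding zGs by (rule Nb_mem)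
      have "Nb r F t 2 \<inter> Nb r G s 2 \<noteq> {}" by (rule zc(2)[OF o1 o2 Nb_mem zN])
      then obtain q where q: "q \<in> Nb r F t 2" "q \<in> Nb r G s 2" by blast
      have "ismax r (fst q) \<beta>" using Nb_ismax[OF W mx q(1)] .
      moreover have "ismax r (fst q) \<gamma>" using Nb_ismax[OF W g q(2)] .
      ultimately have "\<beta> = \<gamma>" by (rule ismax_unique[OF W])
      hence "ismax r G \<beta>" using g by simp
      thus ?thesis unfolding Kset_def using zc(1) False zGs by simp
    qed
  qed
  show "Kset r A \<beta> \<subseteq> nbhd_closure_core (VT r A) (F,t)"
  proof
    fix z assume z: "z \<in> Kset r A \<beta>"
    obtain G s where zGs: "z = (G,s)" by (cases z)
    have zc: "(G,s) \<in> carr A" "ismax r G \<beta>" "\<not> isol (G,s)" using z zGs unfolding Kset_def by auto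
    show "z \<in> nbhd_closure_core (VT r A) (F,t)"
      unfolding core_char[OF pt] topspace_VT
    proof (intro conjI allI impI)
      show "z \<in> carr A" using zc(1) zGs by simp
      fix U V assume U: "openin (VT r A) U" and V: "openin (VT r A) V" and pU: "(F,t) \<in> U" and zV: "z \<in> V"
      have U': "opV r A U" using U by (simp add: openin_VT)
      have V': "opV r A V" using V by (simp add: openin_VT)
      have zV': "(G,s) \<in> V" using zV zGs by simp
      obtain m1 where m1: "\<forall>n\<ge>m1. ({\<beta>},n) \<in> U" using tail[OF W U' pU mx ni] by blast
      obtain m2 where m2: "\<forall>n\<ge>m2. ({\<beta>},n) \<in> V" using tail[OF W V' zV' zc(2) zc(3)] by blast
      have "({\<beta>}, max m1 m2) \<in> U" using m1 by simp
      moreover have "({\<beta>}, max m1 m2) \<in> V" using m2 by simp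
      ultimately show "U \<inter> V \<noteq> {}" by blast
    qed
  qed
qed

lemma homeo_intro:
  assumes inj: "inj_on f (topspace X)" and im: "f ` topspace X = topspace Y"
    and op: "\<And>U. U \<subseteq> topspace X \<Longrightarrow> openin X U \<longleftrightarrow> openin Y (f ` U)"
  shows "homeomorphic_map X Y f"
proof (rule bijective_open_imp_homeomorphic_map[OF _ _ im inj])
  show "continuous_map X Y f"
    unfolding continuous_map_def
  proof (intro conjI allI impI)
    show "f \<in> topspace X \<rightarrow> topspace Y" using im by blast
    fix U assume U: "openin Y U"
    have Us: "U \<subseteq> topspace Y" using U by (rule openin_subset)
    have "f ` {x \<in> topspace X. f x \<in> U} = U"
    proof
      show "f ` {x \<in> topspace X. f x \<in> U} \<subseteq> U" by blast
      show "U \<subseteq> f ` {x \<in> topspace X. f x \<in> U}"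
      proof
        fix y assume y: "y \<in> U"
        hence "y \<in> topspace Y" using Us by (rule subsetD[rotated])
        hence "y \<in> f ` topspace X" using im by simp
        then obtain x where x: "x \<in> topspace X" "y = f x" by blast
        thus "y \<in> f ` {x \<in> topspace X. f x \<in> U}" using y by blast
      qed
    qed
    hence "openin Y (f ` {x \<in> topspace X. f x \<in> U})" using U by simp
    moreover have "{x \<in> topspace X. f x \<in> U} \<subseteq> topspace X" by blast
    ultimately show "openin X {x \<in> topspace X. f x \<in> U}" using op by blast
  qed
  show "open_map X Y f"
    unfolding open_map_def
  proof (intro allI impI)
    fix U assume U: "openin X U"
    thus "openin Y (f ` U)" using op[OF openin_subset[OF U]] by simp
  qed
qed

definition dc :: "'a rel \<Rightarrow> 'a set \<Rightarrow> bool" where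
  "dc r A \<longleftrightarrow> A \<subseteq> Field r \<and> (\<forall>a\<in>A. \<forall>b. (b,a) \<in> r \<longrightarrow> b \<in> A)"

lemma dc_Field: "dc r (Field r)"
  unfolding dc_def by (auto intro: FieldI1)

lemma dc_underS:
  assumes W: "Well_order r" shows "dc r (underS r a)"
  unfolding dc_def
proof (intro conjI ballI allI impI)
  show "underS r a \<subseteq> Field r" unfolding underS_def by (auto intro: FieldI1)
  fix c b assume c: "c \<in> underS r a" and bc: "(b,c) \<in> r"
  have c': "c \<noteq> a" "(c,a) \<in> r" using c unfolding underS_def by auto
  have ba: "(b,a) \<in> r" using wo_trans[OF W bc c'(2)] .
  have "b \<noteq> a"
  proof
    assume "b = a"
    hence "(a,c) \<in> r" using bc by simp
    hence "c = a" using wo_antisym[OF W c'(2)] by simp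
    thus False using c'(1) by simp
  qed
  thus "b \<in> underS r a" using ba unfolding underS_def by simp
qed

definition hm :: "'a \<Rightarrow> 'a set \<times> nat \<Rightarrow> 'a set \<times> nat" where
  "hm \<beta> p = (insert \<beta> (fst p), snd p)"

lemma underS_notin: "X \<subseteq> underS r \<beta> \<Longrightarrow> \<beta> \<notin> X"
  unfolding underS_def by blast

lemma insert_cancel: "insert \<beta> X = insert \<beta> Y \<Longrightarrow> \<beta> \<notin> X \<Longrightarrow> \<beta> \<notin> Y \<Longrightarrow> X = Y"
  by (metis Diff_insert_absorb)

lemma hm_inj: "inj_on (hm \<beta>) (carr (underS r \<beta>))"
proof (rule inj_onI)
  fix p q assume p: "p \<in> carr (underS r \<beta>)" and q: "q \<in> carr (underS r \<beta>)" and e: "hm \<beta> p = hm \<beta> q"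
  have "fst p \<subseteq> underS r \<beta>" "fst q \<subseteq> underS r \<beta>" using p q unfolding carr_def by auto
  hence n: "\<beta> \<notin> fst p" "\<beta> \<notin> fst q" using underS_notin by metis+
  have "insert \<beta> (fst p) = insert \<beta> (fst q)" "snd p = snd q" using e unfolding hm_def by simp_all
  hence "fst p = fst q" "snd p = snd q" using insert_cancel n by metis+
  thus "p = q" by (rule prod_eqI)
qed

lemma underS_sub: "dc r A \<Longrightarrow> \<beta> \<in> A \<Longrightarrow> underS r \<beta> \<subseteq> A"
  unfolding dc_def underS_def by blast

lemma hm_carr:
  assumes W: "Well_order r" and D: "dc r A" and bA: "\<beta> \<in> A"
  shows "hm \<beta> ` carr (underS r \<beta>) = Kset r A \<beta>"
proof
  show "hm \<beta> ` carr (underS r \<beta>) \<subseteq> Kset r A \<beta>"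
  proof
    fix x assume "x \<in> hm \<beta> ` carr (underS r \<beta>)"
    then obtain G s where Gs: "(G,s) \<in> carr (underS r \<beta>)" "x = (insert \<beta> G, s)" unfolding hm_def by auto
    have G: "finite G" "G \<subseteq> underS r \<beta>" "G = {} \<longrightarrow> s \<le> 1" using Gs(1) unfolding carr_def by auto
    have nb: "\<beta> \<notin> G" using G(2) by (rule underS_notin)
    have "insert \<beta> G \<subseteq> A" using G(2) underS_sub[OF D bA] bA by blast
    hence c: "(insert \<beta> G, s) \<in> carr A" using G(1) unfolding carr_def by simp
    have m: "ismax r (insert \<beta> G) \<beta>" using G(2) unfolding ismax_def underS_def by blast
    have ni: "\<not> isol (insert \<beta> G, s)"
    proof
      assume "isol (insert \<beta> G, s)"
      then obtain b where "insert \<beta> G = {b}" "s \<ge> 2" unfolding isol_def by auto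
      hence "G = {}" using nb by blast
      thus False using G(3) \<open>s \<ge> 2\<close> by simp
    qed
    show "x \<in> Kset r A \<beta>" unfolding Kset_def Gs(2) using c m ni by simp
  qed
  show "Kset r A \<beta> \<subseteq> hm \<beta> ` carr (underS r \<beta>)"
  proof
    fix x assume x: "x \<in> Kset r A \<beta>"
    obtain G s where xGs: "x = (G,s)" by (cases x)
    have K: "(G,s) \<in> carr A" "ismax r G \<beta>" "\<not> isol (G,s)" using x xGs unfolding Kset_def by auto
    have G: "finite G" "G \<subseteq> A" using K(1) unfolding carr_def by auto
    have bG: "\<beta> \<in> G" using K(2) unfolding ismax_def by blast
    have sub: "G - {\<beta>} \<subseteq> underS r \<beta>" using K(2) unfolding ismax_def underS_def by blast
    have "G - {\<beta>} = {} \<longrightarrow> s \<le> 1"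
    proof
      assume "G - {\<beta>} = {}"
      hence "G = {\<beta>}" using bG by blast
      thus "s \<le> 1" using K(3) unfolding isol_def by auto
    qed
    hence c: "(G - {\<beta>}, s) \<in> carr (underS r \<beta>)" using G(1) sub unfolding carr_def by simp
    have "hm \<beta> (G - {\<beta>}, s) = x" unfolding hm_def xGs using bG by auto
    thus "x \<in> hm \<beta> ` carr (underS r \<beta>)" using c by (metis image_eqI)
  qed
qed

lemma segm_insert:
  assumes "G \<subseteq> underS r \<beta>" and "b \<in> G"
  shows "segm r (insert \<beta> G) b = insert \<beta> (segm r G b)"
proof -
  have "(b,\<beta>) \<in> r" using assms unfolding underS_def by blast
  thus ?thesis unfolding segm_def by auto
qed

lemma hm_open:
  assumes W: "Well_order r" and D: "dc r A" and bA: "\<beta> \<in> A" and Us: "U \<subseteq> carr (underS r \<beta>)"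
  shows "opV r (underS r \<beta>) U \<longleftrightarrow> openin (subtopology (VT r A) (Kset r A \<beta>)) (hm \<beta> ` U)"
proof
  have hc: "hm \<beta> ` carr (underS r \<beta>) = Kset r A \<beta>" by (rule hm_carr[OF W D bA])
  have hU: "hm \<beta> ` U \<subseteq> Kset r A \<beta>" using Us hc by blast
  have KA: "Kset r A \<beta> \<subseteq> carr A" unfolding Kset_def by blast
  assume U: "opV r (underS r \<beta>) U"
  define T where "T = hm \<beta> ` U \<union> {({\<beta>},n) | n. 2 \<le> n}"
  have bc: "\<And>n. ({\<beta>},n) \<in> carr A" using bA unfolding carr_def by simp
  have "opV r A T"
    unfolding opV_def
  proof (intro conjI allI impI)
    show "T \<subseteq> carr A" unfolding T_def using hU KA bc by blast
    fix G s b assume G: "(G,s) \<in> T" and b: "b \<in> G" and c: "segm r G b \<noteq> G \<or> s \<le> 1"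
    have tl: "\<forall>n\<ge>2. ({\<beta>},n) \<in> T" unfolding T_def by blast
    show "\<exists>m. \<forall>n\<ge>m. (segm r G b, n) \<in> T"
    proof (cases "(G,s) \<in> hm \<beta> ` U")
      case True
      then obtain G' where G': "(G',s) \<in> U" "G = insert \<beta> G'" unfolding hm_def by auto
      have G'c: "G' \<subseteq> underS r \<beta>" using G'(1) Us unfolding carr_def by auto
      show ?thesis
      proof (cases "b = \<beta>")
        case True
        have m: "ismax r G \<beta>" using G'c G'(2) unfolding ismax_def underS_def by blast
        have "segm r G b = {\<beta>}" using segm_max[OF W m] True by simp
        thus ?thesis using tl by auto
      next
        case False
        hence bG': "b \<in> G'" using b G'(2) by simp
        have e: "segm r G b = insert \<beta> (segm r G' b)" unfolding G'(2) by (rule segm_insert[OF G'c bG'])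
        have nb: "\<beta> \<notin> segm r G' b" "\<beta> \<notin> G'" using underS_notin G'c segm_sub[of r G' b] by (metis subset_trans)+
        have "segm r G' b \<noteq> G' \<or> s \<le> 1" using c e G'(2) by auto
        then obtain m where m: "\<forall>n\<ge>m. (segm r G' b, n) \<in> U"
          using U G'(1) bG' unfolding opV_def by blast
        have "\<forall>n\<ge>m. (segm r G b, n) \<in> T"
        proof (intro allI impI)
          fix n assume "m \<le> n"
          hence "(segm r G' b, n) \<in> U" using m by simp
          hence "hm \<beta> (segm r G' b, n) \<in> hm \<beta> ` U" by (rule imageI)
          thus "(segm r G b, n) \<in> T" unfolding T_def e hm_def by simp
        qed
        thus ?thesis by blast
      qed
    next
      case False
      then obtain n where "(G,s) = ({\<beta>},n)" "2 \<le> n" using G unfolding T_def by blast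
      hence "G = {\<beta>}" "s \<ge> 2" by simp_all
      hence "segm r G b = G" using b unfolding segm_def by auto
      hence False using c \<open>s \<ge> 2\<close> by simp
      thus ?thesis ..
    qed
  qed
  moreover have "hm \<beta> ` U = T \<inter> Kset r A \<beta>"
  proof
    show "hm \<beta> ` U \<subseteq> T \<inter> Kset r A \<beta>" using hU unfolding T_def by blast
    show "T \<inter> Kset r A \<beta> \<subseteq> hm \<beta> ` U"
    proof
      fix x assume x: "x \<in> T \<inter> Kset r A \<beta>"
      show "x \<in> hm \<beta> ` U"
      proof (rule ccontr)
        assume "x \<notin> hm \<beta> ` U"
        then obtain n where "x = ({\<beta>},n)" "2 \<le> n" using x unfolding T_def by blast
        hence "isol x" unfolding isol_def by simp
        thus False using x unfolding Kset_def by blast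
      qed
    qed
  qed
  ultimately show "openin (subtopology (VT r A) (Kset r A \<beta>)) (hm \<beta> ` U)"
    unfolding openin_subtopology openin_VT by blast
next
  have hc: "hm \<beta> ` carr (underS r \<beta>) = Kset r A \<beta>" by (rule hm_carr[OF W D bA])
  assume "openin (subtopology (VT r A) (Kset r A \<beta>)) (hm \<beta> ` U)"
  then obtain T where T: "opV r A T" "hm \<beta> ` U = T \<inter> Kset r A \<beta>"
    unfolding openin_subtopology openin_VT by blast
  show "opV r (underS r \<beta>) U"
    unfolding opV_def
  proof (intro conjI allI impI)
    show "U \<subseteq> carr (underS r \<beta>)" by (rule Us)
    fix G' s b assume G': "(G',s) \<in> U" and b: "b \<in> G'" and c: "segm r G' b \<noteq> G' \<or> s \<le> 1"
    have G'c: "G' \<subseteq> underS r \<beta>" using G' Us unfolding carr_def by auto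
    have nb: "\<beta> \<notin> segm r G' b" "\<beta> \<notin> G'" using underS_notin G'c segm_sub[of r G' b] by (metis subset_trans)+
    have e: "segm r (insert \<beta> G') b = insert \<beta> (segm r G' b)" by (rule segm_insert[OF G'c b])
    have "hm \<beta> (G',s) \<in> T" using T(2) G' by blast
    hence inT: "(insert \<beta> G', s) \<in> T" unfolding hm_def by simp
    have c2: "segm r (insert \<beta> G') b \<noteq> insert \<beta> G' \<or> s \<le> 1"
    proof (cases "s \<le> 1")
      case False
      hence ne: "segm r G' b \<noteq> G'" using c by simp
      show ?thesis
      proof (intro disjI1 notI)
        assume "segm r (insert \<beta> G') b = insert \<beta> G'"
        hence "insert \<beta> (segm r G' b) = insert \<beta> G'" using e by simp
        hence "segm r G' b = G'" using insert_cancel nb by metis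
        thus False using ne by simp
      qed
    qed simp
    have bi: "b \<in> insert \<beta> G'" using b by simp
    obtain m where m: "\<forall>n\<ge>m. (segm r (insert \<beta> G') b, n) \<in> T"
      using T(1) inT bi c2 unfolding opV_def by blast
    have "\<forall>n\<ge>m. (segm r G' b, n) \<in> U"
    proof (intro allI impI)
      fix n assume "m \<le> n"
      hence "(insert \<beta> (segm r G' b), n) \<in> T" using m e by simp
      moreover have sc: "(segm r G' b, n) \<in> carr (underS r \<beta>)"
        using Us G' b by (intro segm_carr) auto
      moreover have "hm \<beta> (segm r G' b, n) \<in> Kset r A \<beta>" using sc hc by blast
      ultimately have "hm \<beta> (segm r G' b, n) \<in> hm \<beta> ` U" using T(2) unfolding hm_def by simp
      then obtain q where q: "q \<in> U" "hm \<beta> q = hm \<beta> (segm r G' b, n)" by (metis imageE)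
      have "q = (segm r G' b, n)" using inj_onD[OF hm_inj q(2)] q(1) Us sc by blast
      thus "(segm r G' b, n) \<in> U" using q(1) by simp
    qed
    thus "\<exists>m. \<forall>n\<ge>m. (segm r G' b, n) \<in> U" by blast
  qed
qed

lemma homeo_K:
  assumes W: "Well_order r" and D: "dc r A" and bA: "\<beta> \<in> A"
  shows "homeomorphic_map (VT r (underS r \<beta>)) (subtopology (VT r A) (Kset r A \<beta>)) (hm \<beta>)"
proof (rule homeo_intro)
  show "inj_on (hm \<beta>) (topspace (VT r (underS r \<beta>)))" unfolding topspace_VT by (rule hm_inj)
  have "Kset r A \<beta> \<subseteq> carr A" unfolding Kset_def by blast
  thus "hm \<beta> ` topspace (VT r (underS r \<beta>)) = topspace (subtopology (VT r A) (Kset r A \<beta>))"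
    unfolding topspace_VT topspace_subtopology hm_carr[OF W D bA] by blast
  fix U assume "U \<subseteq> topspace (VT r (underS r \<beta>))"
  hence "U \<subseteq> carr (underS r \<beta>)" by (simp add: topspace_VT)
  thus "openin (VT r (underS r \<beta>)) U = openin (subtopology (VT r A) (Kset r A \<beta>)) (hm \<beta> ` U)"
    unfolding openin_VT by (rule hm_open[OF W D bA])
qed

lemma wo_refl_rel: "Well_order r \<Longrightarrow> Refl r"
  unfolding order_on_defs by blast

lemma ordLess_WO: "(s, t) \<in> ordLess \<Longrightarrow> Well_order s"
  unfolding ordLess_def by blast

lemma underS_Restr_dc:
  assumes D: "dc r A" and a: "a \<in> A"
  shows "underS (Restr r A) a = underS r a"
  using D a unfolding dc_def underS_def by blast

lemma Restr_Restr_sub: "B \<subseteq> A \<Longrightarrow> Restr (Restr r A) B = Restr r B"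
  by blast

lemma O3:
  assumes W: "Well_order r" and D: "dc r A" and a: "a \<in> A"
  shows "(Restr r (underS r a), Restr r A) \<in> ordLess"
proof -
  have W': "Well_order (Restr r A)" using W by (rule Well_order_Restr)
  have F: "Field (Restr r A) = A" using Refl_Field_Restr2[OF wo_refl_rel[OF W]] D unfolding dc_def by blast
  have "(Restr (Restr r A) (underS (Restr r A) a), Restr r A) \<in> ordLess"
    using underS_Restr_ordLess[OF W'] F a by blast
  moreover have "Restr (Restr r A) (underS (Restr r A) a) = Restr r (underS r a)"
    unfolding underS_Restr_dc[OF D a] using underS_sub[OF D a] by (rule Restr_Restr_sub)
  ultimately show ?thesis by simp
qed

lemma O4:
  assumes W: "Well_order r" and D: "dc r A" and Ws: "Well_order s" and l: "(s, Restr r A) \<in> ordLess"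
  shows "\<exists>a\<in>A. (s, Restr r (underS r a)) \<in> ordIso"
proof -
  have W': "Well_order (Restr r A)" using W by (rule Well_order_Restr)
  have F: "Field (Restr r A) = A" using Refl_Field_Restr2[OF wo_refl_rel[OF W]] D unfolding dc_def by blast
  obtain a where a: "a \<in> Field (Restr r A)" "(s, Restr (Restr r A) (underS (Restr r A) a)) \<in> ordIso"
    using ordLess_iff_ordIso_Restr[OF W' Ws] l by blast
  have aA: "a \<in> A" using a(1) F by simp
  have "Restr (Restr r A) (underS (Restr r A) a) = Restr r (underS r a)"
    unfolding underS_Restr_dc[OF D aA] using underS_sub[OF D aA] by (rule Restr_Restr_sub)
  thus ?thesis using a(2) aA by auto
qed

lemma Hausdorff_small:
  assumes "topspace X \<subseteq> {x}" shows "Hausdorff_space X"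
  unfolding Hausdorff_space_def using assms by blast

lemma step:
  fixes r s :: "'a rel"
  assumes W: "Well_order r" and D: "dc r A"
    and IH: "\<And>\<beta> s'::'a rel. \<beta> \<in> A \<Longrightarrow> Well_order s' \<Longrightarrow>
        (alpha_hausdorff s' (VT r (underS r \<beta>)) \<longleftrightarrow> (Restr r (underS r \<beta>), s') \<in> ordLeq)"
    and Ws: "Well_order s"
  shows "alpha_hausdorff s (VT r A) \<longleftrightarrow> (Restr r A, s) \<in> ordLeq"
proof (cases "A = {}")
  case True
  have H: "Hausdorff_space (VT r A)"
    unfolding Hausdorff_space_def
  proof (intro allI impI)
    fix x y assume xy: "x \<in> topspace (VT r A) \<and> y \<in> topspace (VT r A) \<and> x \<noteq> y"
    have xc: "x \<in> carr A" "y \<in> carr A" using xy by (simp_all add: topspace_VT)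
    have "fst x \<subseteq> A" "fst y \<subseteq> A" using xc unfolding carr_def by auto
    hence "isol x" "isol y" using True unfolding isol_def by auto
    hence "openin (VT r A) {x}" "openin (VT r A) {y}" using xc opV_single by (simp_all add: openin_VT)
    thus "\<exists>U V. openin (VT r A) U \<and> openin (VT r A) V \<and> x \<in> U \<and> y \<in> V \<and> disjnt U V"
      using xy by (intro exI[of _ "{x}"] exI[of _ "{y}"]) auto
  qed
  have "alpha_hausdorff s (VT r A)" using L0[OF H Ws] .
  moreover have "(Restr r A, s) \<in> ordLeq"
    by (rule empty_ordLeq) (simp_all add: True Well_order_Restr[OF W] Ws)
  ultimately show ?thesis by simp
next
  case False
  then obtain \<beta>0 where b0: "\<beta>0 \<in> A" by blast
  have AF: "A \<subseteq> Field r" using D unfolding dc_def by blast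
  have WA: "Well_order (Restr r A)" using W by (rule Well_order_Restr)
  have p0: "({\<beta>0}, 0) \<in> carr A" "({\<beta>0}, 1) \<in> carr A" using b0 unfolding carr_def by auto
  have ni0: "\<not> isol ({\<beta>0}, 0)" "\<not> isol ({\<beta>0}, 1::nat)" unfolding isol_def by auto
  have m0: "ismax r {\<beta>0} \<beta>0" unfolding ismax_def by simp
  have notH: "\<not> Hausdorff_space (VT r A)"
  proof
    assume H: "Hausdorff_space (VT r A)"
    have pt: "({\<beta>0}, 0) \<in> topspace (VT r A)" "({\<beta>0}, 1) \<in> topspace (VT r A)" using p0 by (simp_all add: topspace_VT)
    have "({\<beta>0}, 1) \<in> Kset r A \<beta>0" unfolding Kset_def using p0 ni0 m0 by simp
    hence q: "({\<beta>0}, 1) \<in> nbhd_closure_core (VT r A) ({\<beta>0}, 0)"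
      using core_K[OF W AF p0(1) ni0(1) m0] by simp
    obtain U V where UV: "openin (VT r A) U" "openin (VT r A) V" "({\<beta>0}, 0) \<in> U" "({\<beta>0}, 1) \<in> V" "disjnt U V"
      using H pt unfolding Hausdorff_space_def by (metis Pair_inject zero_neq_one)
    have "U \<inter> V \<noteq> {}" using q UV(1-4) unfolding core_char[OF pt(1)] by blast
    thus False using UV(5) unfolding disjnt_def by simp
  qed
  show ?thesis
  proof
    assume AH: "alpha_hausdorff s (VT r A)"
    show "(Restr r A, s) \<in> ordLeq"
    proof (rule ccontr)
      assume "(Restr r A, s) \<notin> ordLeq"
      hence sl: "(s, Restr r A) \<in> ordLess" using not_ordLeq_iff_ordLess[OF Ws WA] by simp
      obtain \<beta> where b: "\<beta> \<in> A" "(s, Restr r (underS r \<beta>)) \<in> ordIso" using O4[OF W D Ws sl] by blast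
      have allx: "\<forall>x\<in>topspace (VT r A). \<exists>s'::'a rel. (s', s) \<in> ordLess \<and> alpha_hausdorff s' (subtopology (VT r A) (nbhd_closure_core (VT r A) x))"
        using AH
      proof (cases rule: alpha_hausdorff.cases)
        case zero thus ?thesis using notH by simp
      next
        case pos thus ?thesis by simp
      qed
      have pb: "({\<beta>}, 0) \<in> carr A" using b(1) unfolding carr_def by auto
      have nib: "\<not> isol ({\<beta>}, 0)" unfolding isol_def by auto
      have mb: "ismax r {\<beta>} \<beta>" unfolding ismax_def by simp
      have ptb: "({\<beta>}, 0) \<in> topspace (VT r A)" using pb by (simp add: topspace_VT)
      obtain s' :: "'a rel" where s': "(s', s) \<in> ordLess" "alpha_hausdorff s' (subtopology (VT r A) (nbhd_closure_core (VT r A) ({\<beta>}, 0)))"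
        using allx ptb by blast
      have AK: "alpha_hausdorff s' (subtopology (VT r A) (Kset r A \<beta>))"
        using s'(2) core_K[OF W AF pb nib mb] by simp
      have "(VT r (underS r \<beta>)) homeomorphic_space (subtopology (VT r A) (Kset r A \<beta>))"
        using homeo_K[OF W D b(1)] homeomorphic_space by blast
      then obtain g where g: "homeomorphic_map (subtopology (VT r A) (Kset r A \<beta>)) (VT r (underS r \<beta>)) g"
        using homeomorphic_space homeomorphic_space_sym by metis
      have "alpha_hausdorff s' (VT r (underS r \<beta>))" using ah_homeo[OF AK g] .
      hence le: "(Restr r (underS r \<beta>), s') \<in> ordLeq" using IH[OF b(1) ordLess_WO[OF s'(1)]] by simp
      have "(Restr r (underS r \<beta>), s) \<in> ordLess" using ordLeq_ordLess_trans[OF le s'(1)] .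
      hence "(Restr r (underS r \<beta>), Restr r (underS r \<beta>)) \<in> ordLess" using ordLess_ordIso_trans b(2) by blast
      thus False using ordLess_irreflexive by blast
    qed
  next
    assume L: "(Restr r A, s) \<in> ordLeq"
    have l0: "(Restr r (underS r \<beta>0), s) \<in> ordLess" using ordLess_ordLeq_trans[OF O3[OF W D b0] L] .
    have Fs: "Field s \<noteq> {}"
    proof
      assume "Field s = {}"
      hence "(s, Restr r (underS r \<beta>0)) \<in> ordLeq" using empty_ordLeq[OF _ Ws Well_order_Restr[OF W]] by simp
      thus False using l0 not_ordLess_ordLeq by blast
    qed
    show "alpha_hausdorff s (VT r A)"
    proof (rule alpha_hausdorff.pos[OF Ws Fs t1_VT])
      show "\<forall>x\<in>topspace (VT r A). \<exists>s'::'a rel. (s', s) \<in> ordLess \<and> alpha_hausdorff s' (subtopology (VT r A) (nbhd_closure_core (VT r A) x))"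
      proof
        fix x assume xt: "x \<in> topspace (VT r A)"
        hence xc: "x \<in> carr A" by (simp add: topspace_VT)
        obtain F t where xFt: "x = (F,t)" by (cases x)
        show "\<exists>s'::'a rel. (s', s) \<in> ordLess \<and> alpha_hausdorff s' (subtopology (VT r A) (nbhd_closure_core (VT r A) x))"
        proof (cases "isol x")
          case True
          have "nbhd_closure_core (VT r A) x \<subseteq> {x}" using core_iso[OF xc True] .
          hence "topspace (subtopology (VT r A) (nbhd_closure_core (VT r A) x)) \<subseteq> {x}" by auto
          hence "Hausdorff_space (subtopology (VT r A) (nbhd_closure_core (VT r A) x))" by (rule Hausdorff_small)
          hence "alpha_hausdorff ({}::'a rel) (subtopology (VT r A) (nbhd_closure_core (VT r A) x))"
            by (intro alpha_hausdorff.zero[OF wo_empty]) simp_all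
          thus ?thesis using empty_ordLess[OF Ws Fs] by blast
        next
          case False
          have Fc: "finite F" "F \<subseteq> A" using xc xFt unfolding carr_def by auto
          have Fne: "F \<noteq> {}" using False xFt unfolding isol_def by auto
          have "F \<subseteq> Field r" using Fc(2) AF by (rule subset_trans)
          then obtain \<beta> where mb: "ismax r F \<beta>" using max_exists[OF W Fc(1) Fne] by blast
          have bA: "\<beta> \<in> A" using mb Fc(2) unfolding ismax_def by blast
          have xc': "(F,t) \<in> carr A" using xc xFt by simp
          have ni': "\<not> isol (F,t)" using False xFt by simp
          have core: "nbhd_closure_core (VT r A) x = Kset r A \<beta>" using core_K[OF W AF xc' ni' mb] xFt by simp
          define s' where "s' = Restr r (underS r \<beta>)"
          have Ws': "Well_order s'" unfolding s'_def using W by (rule Well_order_Restr)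
          have sl: "(s', s) \<in> ordLess" unfolding s'_def using ordLess_ordLeq_trans[OF O3[OF W D bA] L] .
          have "alpha_hausdorff s' (VT r (underS r \<beta>))"
            using IH[OF bA Ws'] ordLeq_reflexive[OF Ws'] unfolding s'_def by simp
          hence "alpha_hausdorff s' (subtopology (VT r A) (Kset r A \<beta>))"
            using ah_homeo homeo_K[OF W D bA] by blast
          thus ?thesis using sl core by auto
        qed
      qed
    qed
  qed
qed

lemma allseg:
  fixes r :: "'a rel"
  assumes W: "Well_order r"
  shows "\<forall>s::'a rel. Well_order s \<longrightarrow> (alpha_hausdorff s (VT r (underS r a)) \<longleftrightarrow> (Restr r (underS r a), s) \<in> ordLeq)"
proof -
  have wf: "wf (r - Id)" using W unfolding well_order_on_def by blast
  show ?thesis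
  proof (induction a rule: wf_induct[OF wf])
    case (1 a)
    show ?case
    proof (intro allI impI)
      fix s :: "'a rel" assume Ws: "Well_order s"
      show "alpha_hausdorff s (VT r (underS r a)) \<longleftrightarrow> (Restr r (underS r a), s) \<in> ordLeq"
      proof (rule step[OF W dc_underS[OF W] _ Ws])
        fix \<beta> and s' :: "'a rel" assume b: "\<beta> \<in> underS r a" and Ws': "Well_order s'"
        have "(\<beta>, a) \<in> r - Id" using b unfolding underS_def by blast
        thus "alpha_hausdorff s' (VT r (underS r \<beta>)) \<longleftrightarrow> (Restr r (underS r \<beta>), s') \<in> ordLeq"
          using 1 Ws' by blast
      qed
    qed
  qed
qed

lemma main_iff:
  fixes r s :: "'a rel"
  assumes W: "Well_order r" and Ws: "Well_order s"
  shows "alpha_hausdorff s (VT r (Field r)) \<longleftrightarrow> (r, s) \<in> ordLeq"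
proof -
  have "alpha_hausdorff s (VT r (Field r)) \<longleftrightarrow> (Restr r (Field r), s) \<in> ordLeq"
  proof (rule step[OF W dc_Field _ Ws])
    fix \<beta> and s' :: "'a rel" assume "\<beta> \<in> Field r" "Well_order s'"
    thus "alpha_hausdorff s' (VT r (underS r \<beta>)) \<longleftrightarrow> (Restr r (underS r \<beta>), s') \<in> ordLeq"
      using allseg[OF W, of \<beta>] by blast
  qed
  thus ?thesis by (simp add: Restr_Field)
qed

lemma image_top:
  assumes inj: "inj_on f (topspace X)"
  shows "\<exists>Y. homeomorphic_map X Y f"
proof -
  define P where "P = (\<lambda>U. \<exists>V. openin X V \<and> U = f ` V)"
  have ist: "istopology P"
    unfolding istopology_def
  proof (intro conjI allI impI)
    fix S T assume S: "P S" and T: "P T"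
    then obtain V1 V2 where V: "openin X V1" "S = f ` V1" "openin X V2" "T = f ` V2" unfolding P_def by blast
    have "f ` (V1 \<inter> V2) = f ` V1 \<inter> f ` V2"
      using inj_on_image_Int[OF inj openin_subset[OF V(1)] openin_subset[OF V(3)]] .
    moreover have "openin X (V1 \<inter> V2)" using V(1,3) by (rule openin_Int)
    ultimately show "P (S \<inter> T)" unfolding P_def using V(2,4) by metis
  next
    fix K assume K: "\<forall>S\<in>K. P S"
    define V where "V = \<Union>{W. openin X W \<and> f ` W \<in> K}"
    have "openin X V" unfolding V_def by (rule openin_Union) blast
    moreover have "f ` V = \<Union>K"
    proof
      show "f ` V \<subseteq> \<Union>K" unfolding V_def by blast
      show "\<Union>K \<subseteq> f ` V"
      proof
        fix y assume "y \<in> \<Union>K"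
        then obtain S where S: "S \<in> K" "y \<in> S" by blast
        then obtain W where W: "openin X W" "S = f ` W" using K unfolding P_def by blast
        hence "W \<subseteq> V" unfolding V_def using S(1) by blast
        thus "y \<in> f ` V" using S(2) W(2) by blast
      qed
    qed
    ultimately show "P (\<Union>K)" unfolding P_def by metis
  qed
  define Y where "Y = topology P"
  have oY: "\<And>U. openin Y U \<longleftrightarrow> P U" unfolding Y_def using topology_inverse'[OF ist] by simp
  have tY: "topspace Y = f ` topspace X"
  proof
    have "P (f ` topspace X)" unfolding P_def by blast
    thus "f ` topspace X \<subseteq> topspace Y" using oY openin_subset by metis
    have "P (topspace Y)" using oY openin_topspace by metis
    then obtain V where "openin X V" "topspace Y = f ` V" unfolding P_def by blast
    thus "topspace Y \<subseteq> f ` topspace X" using openin_subset by (metis image_mono)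
  qed
  have "homeomorphic_map X Y f"
  proof (rule homeo_intro[OF inj tY[symmetric]])
    fix U assume U: "U \<subseteq> topspace X"
    show "openin X U \<longleftrightarrow> openin Y (f ` U)"
    proof
      assume "openin X U" thus "openin Y (f ` U)" unfolding oY P_def by blast
    next
      assume "openin Y (f ` U)"
      then obtain V where V: "openin X V" "f ` U = f ` V" unfolding oY P_def by blast
      have "U = V" using inj_on_image_eq_iff[OF inj U openin_subset[OF V(1)]] V(2) by simp
      thus "openin X U" using V(1) by simp
    qed
  qed
  thus ?thesis by blast
qed

definition enc :: "'a set \<times> nat \<Rightarrow> ('a + nat) set" where
  "enc p = Inl ` fst p \<union> {Inr (snd p)}"

lemma enc_inj: "inj enc"
proof (rule injI)
  fix p q :: "'a set \<times> nat" assume e: "enc p = enc q"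
  have "fst p = fst q"
  proof
    show "fst p \<subseteq> fst q"
    proof
      fix x assume "x \<in> fst p"
      hence "Inl x \<in> enc q" using e unfolding enc_def by blast
      thus "x \<in> fst q" unfolding enc_def by auto
    qed
    show "fst q \<subseteq> fst p"
    proof
      fix x assume "x \<in> fst q"
      hence "Inl x \<in> enc p" using e unfolding enc_def by blast
      thus "x \<in> fst p" unfolding enc_def by auto
    qed
  qed
  moreover have "snd p = snd q"
  proof -
    have "Inr (snd p) \<in> enc q" using e unfolding enc_def by blast
    thus ?thesis unfolding enc_def by auto
  qed
  ultimately show "p = q" by (rule prod_eqI)
qed

theorem theorem18:
  fixes r :: "'a rel"
  assumes "Well_order r"
  shows "\<exists>X :: ('a + nat) set topology.
           peripherally_hausdorff TYPE('a) X \<and> T2_rank_is X r"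
proof -
  let ?V = "VT r (Field r)"
  have "inj_on (enc :: 'a set \<times> nat \<Rightarrow> ('a + nat) set) (topspace ?V)"
    using enc_inj by (rule inj_on_subset) simp
  then obtain Y :: "('a + nat) set topology" where hY: "homeomorphic_map ?V Y enc"
    using image_top by blast
  have "?V homeomorphic_space Y" using hY homeomorphic_space by blast
  then obtain g where hg: "homeomorphic_map Y ?V g"
    using homeomorphic_space homeomorphic_space_sym by metis
  have AV: "alpha_hausdorff r ?V" using main_iff[OF assms assms] ordLeq_reflexive[OF assms] by simp
  have AY: "alpha_hausdorff r Y" using ah_homeo[OF AV hY] .
  have "peripherally_hausdorff TYPE('a) Y" unfolding peripherally_hausdorff_def using assms AY by blast
  moreover have "T2_rank_is Y r"
    unfolding T2_rank_is_def
  proof (intro conjI assms AY allI impI notI)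
    fix s :: "'a rel" assume sl: "(s, r) \<in> ordLess" and AS: "alpha_hausdorff s Y"
    have "alpha_hausdorff s ?V" using ah_homeo[OF AS hg] .
    hence "(r, s) \<in> ordLeq" using main_iff[OF assms ordLess_WO[OF sl]] by simp
    thus False using sl not_ordLess_ordLeq by blast
  qed
  ultimately show ?thesis by blast
qed

end
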